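(* Let $\phi\in\mathrm{Aut}_0(H)$. Then $\phi(H(m))\not\subseteq\sum_{i=0}^{m-1}H(i)$ for all $m\geq1$.
   Context: Let $k$ be a field and $0\neq q\in k$ not a root of unity. $H=k_q[x,x^{-1},y]$ is the $k$-algebra generated by $x,x^{-1},y$ with $xx^{-1}=x^{-1}x=1$, $yx=qxy$, a Hopf algebra with $\Delta(x)=x\otimes x$, $\Delta(x^{-1})=x^{-1}\otimes x^{-1}$, $\Delta(y)=y\otimes x+1\otimes y$, $\varepsilon(x)=1$, $\varepsilon(y)=0$; $\{x^ny^m:n\in\mathbb{Z},m\in\mathbb{N}\}$ is a $k$-basis. $H_0=\mathrm{span}\{x^n:n\in\mathbb{Z}\}$ and $H(m)=H_0y^m$. $\mathrm{Aut}_0(H)$ is the group of coalgebra automorphisms $\phi$ of $H$ with $\phi(1)=1$. *)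

theory Defs
  imports Main
begin

text \<open>Elements of H = k_q[x,x^-1,y] are finitely supported coefficient functions on the
basis x^n y^m, indexed by (n,m) :: int * nat.  Elements of H (x) H are finitely supported
functions on pairs of basis indices (basis x^a y^b (x) x^c y^d).\<close>

type_synonym 'k hq = "int \<times> nat \<Rightarrow> 'k"
type_synonym 'k hq2 = "(int \<times> nat) \<times> (int \<times> nat) \<Rightarrow> 'k"

definition fsupp :: "('a \<Rightarrow> 'k::zero) \<Rightarrow> 'a set" where
  "fsupp f = {b. f b \<noteq> 0}"

definition fin_supp :: "('a \<Rightarrow> 'k::zero) set" where
  "fin_supp = {f. finite (fsupp f)}"

definition Hq :: "'k::zero hq set" where
  "Hq = fin_supp"

definition hmono :: "int \<times> nat \<Rightarrow> 'k::{zero,one} hq" where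
  "hmono b = (\<lambda>c. if c = b then 1 else 0)"

definition tmono :: "int \<times> nat \<Rightarrow> int \<times> nat \<Rightarrow> 'k::{zero,one} hq2" where
  "tmono b1 b2 = (\<lambda>p. if p = (b1, b2) then 1 else 0)"

text \<open>(x^a y^b)(x^c y^d) = q^(b c) x^(a+c) y^(b+d), since y x = q x y.\<close>
definition mono_add :: "int \<times> nat \<Rightarrow> int \<times> nat \<Rightarrow> int \<times> nat" where
  "mono_add b c = (fst b + fst c, snd b + snd c)"

definition mono_coef :: "'k::field \<Rightarrow> int \<times> nat \<Rightarrow> int \<times> nat \<Rightarrow> 'k" where
  "mono_coef q b c = q powi (int (snd b) * fst c)"

definition tmul :: "'k::field \<Rightarrow> 'k hq2 \<Rightarrow> 'k hq2 \<Rightarrow> 'k hq2" where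
  "tmul q S T = (\<lambda>c. \<Sum>p\<in>fsupp S. \<Sum>p'\<in>fsupp T.
      if (mono_add (fst p) (fst p'), mono_add (snd p) (snd p')) = c
      then mono_coef q (fst p) (fst p') * mono_coef q (snd p) (snd p') * S p * T p'
      else 0)"

primrec tpow :: "'k::field \<Rightarrow> 'k hq2 \<Rightarrow> nat \<Rightarrow> 'k hq2" where
  "tpow q T 0 = tmono (0,0) (0,0)"
| "tpow q T (Suc n) = tmul q (tpow q T n) T"

definition Delta_y :: "'k::field hq2" where
  "Delta_y = (\<lambda>p. tmono (0,1) (1,0) p + tmono (0,0) (0,1) p)"

text \<open>Delta(x^n y^m) = Delta(x)^n Delta(y)^m = (x^n (x) x^n) (y (x) x + 1 (x) y)^m.\<close>
definition Delta_mono :: "'k::field \<Rightarrow> int \<times> nat \<Rightarrow> 'k hq2" where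
  "Delta_mono q b = tmul q (tmono (fst b, 0) (fst b, 0)) (tpow q Delta_y (snd b))"

definition Delta :: "'k::field \<Rightarrow> 'k hq \<Rightarrow> 'k hq2" where
  "Delta q f = (\<lambda>p. \<Sum>b\<in>fsupp f. f b * Delta_mono q b p)"

definition counit :: "'k::field hq \<Rightarrow> 'k" where
  "counit f = (\<Sum>b\<in>fsupp f. if snd b = 0 then f b else 0)"

definition tensor_map :: "('k::field hq \<Rightarrow> 'k hq) \<Rightarrow> 'k hq2 \<Rightarrow> 'k hq2" where
  "tensor_map \<phi> T = (\<lambda>p. \<Sum>p'\<in>fsupp T.
      T p' * \<phi> (hmono (fst p')) (fst p) * \<phi> (hmono (snd p')) (snd p))"

definition Aut0 :: "'k::field \<Rightarrow> ('k hq \<Rightarrow> 'k hq) set" where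
  "Aut0 q = {\<phi>.
      (\<forall>f\<in>Hq. \<forall>g\<in>Hq. \<phi> (\<lambda>b. f b + g b) = (\<lambda>b. \<phi> f b + \<phi> g b)) \<and>
      (\<forall>c. \<forall>f\<in>Hq. \<phi> (\<lambda>b. c * f b) = (\<lambda>b. c * \<phi> f b)) \<and>
      bij_betw \<phi> Hq Hq \<and>
      (\<forall>f\<in>Hq. Delta q (\<phi> f) = tensor_map \<phi> (Delta q f)) \<and>
      (\<forall>f\<in>Hq. counit (\<phi> f) = counit f) \<and>
      \<phi> (hmono (0,0)) = hmono (0,0)}"

definition Hdeg :: "nat \<Rightarrow> 'k::zero hq set" where
  "Hdeg m = {f\<in>Hq. fsupp f \<subseteq> {b. snd b = m}}"

definition Hbelow :: "nat \<Rightarrow> 'k::zero hq set" where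
  "Hbelow m = {f\<in>Hq. fsupp f \<subseteq> {b. snd b < m}}"

end

theory Submission
  imports Defs
begin

lemma sum_single:
  assumes "finite A" "\<And>x. x \<in> A \<Longrightarrow> x \<noteq> za \<Longrightarrow> f x = 0" "za \<notin> A \<Longrightarrow> f za = 0"
  shows "sum f A = f za"
proof (cases "za \<in> A")
  case True
  then have "sum f A = f za + sum f (A - {za})" using assms(1) by (simp add: sum.remove)
  also have "sum f (A - {za}) = 0" using assms(2) by (intro sum.neutral) auto
  finally show ?thesis by simp
next
  case False
  then show ?thesis using assms by (auto intro!: sum.neutral)
qed

lemma sum_two:
  assumes "finite A" "\<And>x. x \<in> A \<Longrightarrow> x \<noteq> za \<Longrightarrow> x \<noteq> zb \<Longrightarrow> f x = 0"
    "za \<notin> A \<Longrightarrow> f za = 0" "zb \<notin> A \<Longrightarrow> f zb = 0" "za \<noteq> zb"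
  shows "sum f A = f za + f zb"
proof -
  have "sum f A = sum f (A \<union> {za,zb})"
    using assms by (intro sum.mono_neutral_left) auto
  also have "\<dots> = sum f {za,zb}"
  proof (rule sum.mono_neutral_right)
    show "\<forall>i\<in>A \<union> {za, zb} - {za, zb}. f i = 0" using assms(2) by blast
  qed (use assms in auto)
  finally show ?thesis using assms(5) by simp
qed

definition pt :: "nat \<Rightarrow> nat \<Rightarrow> (int\<times>nat)\<times>(int\<times>nat)" where
  "pt i j = ((0, i), (int i, j))"

lemma pt_eq[simp]: "pt a b = pt c d \<longleftrightarrow> a = c \<and> b = d"
  by (auto simp: pt_def)

lemma fsupp_Dy: "fsupp (Delta_y :: 'k::field hq2) = {((0,1),(1,0)), ((0,0),(0,1))}"
  by (auto simp: fsupp_def Delta_y_def tmono_def)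

lemma tmul_Dy:
  "tmul q S (Delta_y :: 'k::field hq2) c = (\<Sum>p\<in>fsupp S.
     (if (mono_add (fst p) (0,1), mono_add (snd p) (1,0)) = c
      then mono_coef q (fst p) (0,1) * mono_coef q (snd p) (1,0) * S p else 0) +
     (if (mono_add (fst p) (0,0), mono_add (snd p) (0,1)) = c
      then mono_coef q (fst p) (0,0) * mono_coef q (snd p) (0,1) * S p else 0))"
  unfolding tmul_def fsupp_Dy
  by (intro sum.cong refl) (simp add: Delta_y_def tmono_def)

lemma tpow_supp:
  "tpow q Delta_y m c \<noteq> (0::'k::field) \<Longrightarrow> \<exists>i\<le>m. c = pt i (m - i)"
proof (induction m arbitrary: c)
  case 0
  then show ?case by (auto simp: tmono_def pt_def split: if_splits)
next
  case (Suc m)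
  from Suc.prems have "tmul q (tpow q Delta_y m) Delta_y c \<noteq> 0" by simp
  then obtain p where p: "p \<in> fsupp (tpow q Delta_y m)" and
    nz: "(if (mono_add (fst p) (0,1), mono_add (snd p) (1,0)) = c
      then mono_coef q (fst p) (0,1) * mono_coef q (snd p) (1,0) * tpow q Delta_y m p else 0) +
     (if (mono_add (fst p) (0,0), mono_add (snd p) (0,1)) = c
      then mono_coef q (fst p) (0,0) * mono_coef q (snd p) (0,1) * tpow q Delta_y m p else 0) \<noteq> 0"
    unfolding tmul_Dy by (meson sum.not_neutral_contains_not_neutral)
  have "tpow q Delta_y m p \<noteq> 0" using p by (simp add: fsupp_def)
  from Suc.IH[OF this] obtain i where i: "i \<le> m" "p = pt i (m - i)" by blast
  show ?case
  proof (cases "(mono_add (fst p) (0,1), mono_add (snd p) (1,0)) = c")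
    case True
    then have "c = pt (Suc i) (Suc m - Suc i)" using i by (auto simp: pt_def mono_add_def)
    then show ?thesis using i by (intro exI[of _ "Suc i"]) auto
  next
    case False
    with nz have "(mono_add (fst p) (0,0), mono_add (snd p) (0,1)) = c" by (auto split: if_splits)
    then have "c = pt i (Suc m - i)" using i by (simp add: pt_def mono_add_def Suc_diff_le)
    then show ?thesis using i by (intro exI[of _ i]) auto
  qed
qed

lemma tpow_fin: "finite (fsupp (tpow q Delta_y m :: 'k::field hq2))"
proof -
  have "fsupp (tpow q Delta_y m :: 'k hq2) \<subseteq> (\<lambda>i. pt i (m - i)) ` {..m}"
  proof
    fix c assume "c \<in> fsupp (tpow q Delta_y m :: 'k hq2)"
    then have "tpow q Delta_y m c \<noteq> (0::'k)" by (simp add: fsupp_def)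
    from tpow_supp[OF this] show "c \<in> (\<lambda>i. pt i (m - i)) ` {..m}" by blast
  qed
  then show ?thesis by (rule finite_subset) simp
qed

lemma powi_diff_nat: "x \<le> m \<Longrightarrow> (q::'k::field) powi (int m - int x) = q ^ (m - x)"
  by (metis of_nat_diff power_int_of_nat)

lemma tpow_Suc_eval:
  "tpow q Delta_y (Suc m) c = (\<Sum>i\<le>m.
     (if pt (Suc i) (m-i) = c then q^(m-i) * tpow q Delta_y m (pt i (m-i)) else 0) +
     (if pt i (Suc (m-i)) = c then tpow q Delta_y m (pt i (m-i)) else (0::'k::field)))"
proof -
  let ?S = "tpow q Delta_y m :: 'k hq2"
  let ?F = "\<lambda>p. (if (mono_add (fst p) (0,1), mono_add (snd p) (1,0)) = c
      then mono_coef q (fst p) (0,1) * mono_coef q (snd p) (1,0) * ?S p else 0) +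
     (if (mono_add (fst p) (0,0), mono_add (snd p) (0,1)) = c
      then mono_coef q (fst p) (0,0) * mono_coef q (snd p) (0,1) * ?S p else 0)"
  have "tpow q Delta_y (Suc m) c = sum ?F (fsupp ?S)" by (simp add: tmul_Dy)
  also have "\<dots> = sum ?F ((\<lambda>i. pt i (m - i)) ` {..m})"
  proof (rule sum.mono_neutral_left)
    show "fsupp ?S \<subseteq> (\<lambda>i. pt i (m - i)) ` {..m}"
    proof
      fix c assume "c \<in> fsupp ?S"
      then have "?S c \<noteq> (0::'k)" by (simp add: fsupp_def)
      from tpow_supp[OF this] show "c \<in> (\<lambda>i. pt i (m - i)) ` {..m}" by blast
    qed
  qed (auto simp: fsupp_def)
  also have "\<dots> = sum (?F \<circ> (\<lambda>i. pt i (m - i))) {..m}"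
    by (intro sum.reindex) (auto simp: inj_on_def)
  also have "\<dots> = (\<Sum>i\<le>m.
     (if pt (Suc i) (m-i) = c then q^(m-i) * tpow q Delta_y m (pt i (m-i)) else 0) +
     (if pt i (Suc (m-i)) = c then tpow q Delta_y m (pt i (m-i)) else (0::'k::field)))"
    by (intro sum.cong refl) (auto simp: mono_add_def mono_coef_def pt_def Suc_diff_le add.commute powi_diff_nat)
  finally show ?thesis .
qed

lemma tpow_top: "tpow q Delta_y m (pt m 0) = (1::'k::field)"
proof (induction m)
  case 0
  then show ?case by (simp add: tmono_def pt_def)
next
  case (Suc m)
  show ?case unfolding tpow_Suc_eval
    by (subst sum_single[where za=m]) (use Suc in auto)
qed

lemma tpow_bot: "tpow q Delta_y m (pt 0 m) = (1::'k::field)"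
proof (induction m)
  case 0
  then show ?case by (simp add: tmono_def pt_def)
next
  case (Suc m)
  show ?case unfolding tpow_Suc_eval
    by (subst sum_single[where za=0]) (use Suc in auto)
qed

lemma tpow_mid:
  "tpow q Delta_y (Suc (Suc k)) (pt (Suc k) 1) =
     q * tpow q Delta_y (Suc k) (pt k 1) + (1::'k::field)"
  unfolding tpow_Suc_eval[of q "Suc k" "pt (Suc k) 1"]
  by (subst sum_two[where za=k and zb="Suc k"]) (auto simp: tpow_top simp del: tpow.simps)

lemma tpow_mid_val: "tpow q Delta_y (Suc k) (pt k 1) * (q - 1) = q ^ Suc k - (1::'k::field)"
proof (induction k)
  case 0
  then show ?case using tpow_bot[of q 1] by simp
next
  case (Suc k)
  show ?case unfolding tpow_mid using Suc by (simp add: algebra_simps)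
qed

lemma tpow_mid_nz:
  assumes "\<forall>n::nat. n > 0 \<longrightarrow> (q::'k::field) ^ n \<noteq> 1"
  shows "tpow q Delta_y (Suc k) (pt k 1) \<noteq> 0"
  using tpow_mid_val[of q k] assms by (metis mult_zero_left right_minus_eq zero_less_Suc)

lemma fsupp_tmono: "fsupp (tmono a b :: 'k::field hq2) = {(a,b)}"
  by (auto simp: fsupp_def tmono_def)

lemma tpow_supp_sub: "fsupp (tpow q Delta_y m :: 'k::field hq2) \<subseteq> (\<lambda>i. pt i (m - i)) ` {..m}"
proof
  fix c assume "c \<in> fsupp (tpow q Delta_y m :: 'k hq2)"
  then have "tpow q Delta_y m c \<noteq> (0::'k)" by (simp add: fsupp_def)
  from tpow_supp[OF this] show "c \<in> (\<lambda>i. pt i (m - i)) ` {..m}" by blast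
qed

lemma dm_eval:
  "Delta_mono q (b1,m) c = (\<Sum>i\<le>m. if ((b1, i),(b1 + int i, m - i)) = c
      then tpow q Delta_y m (pt i (m - i)) else (0::'k::field))"
proof -
  define b where "b = (b1, m)"
  note b = b_def
  let ?S = "tpow q Delta_y m :: 'k hq2"
  let ?F = "\<lambda>p'. if (mono_add (b1,0) (fst p'), mono_add (b1,0) (snd p')) = c
      then mono_coef q (b1,0) (fst p') * mono_coef q (b1,0) (snd p') * 1 * ?S p' else 0"
  have "Delta_mono q b c = sum ?F (fsupp ?S)"
    unfolding Delta_mono_def tmul_def b fsupp_tmono
    apply simp
    apply (intro sum.cong refl)
    apply (simp add: tmono_def)
    done
  also have "\<dots> = sum ?F ((\<lambda>i. pt i (m - i)) ` {..m})"
    by (rule sum.mono_neutral_left) (use tpow_supp_sub[of q m] in \<open>auto simp: fsupp_def\<close>)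
  also have "\<dots> = sum (?F \<circ> (\<lambda>i. pt i (m - i))) {..m}"
    by (intro sum.reindex) (auto simp: inj_on_def)
  also have "\<dots> = (\<Sum>i\<le>m. if ((b1, i),(b1 + int i, m - i)) = c
      then ?S (pt i (m - i)) else 0)"
    by (intro sum.cong refl) (auto simp: mono_add_def mono_coef_def pt_def)
  finally show ?thesis by (simp add: b)
qed

lemma dm_supp: "Delta_mono q (b1,m) c \<noteq> (0::'k::field) \<Longrightarrow>
   \<exists>i\<le>m. c = ((b1, i),(b1 + int i, m - i))"
  unfolding dm_eval
  by (drule sum.not_neutral_contains_not_neutral) (auto split: if_splits)

lemma dm_top: "Delta_mono q (b1, m) ((b1, m), (b1 + int m, 0)) = (1::'k::field)"
  unfolding dm_eval by (subst sum_single[where za=m]) (auto simp: tpow_top)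

lemma dm_bot: "Delta_mono q (b1, m) ((b1, 0), (b1, m)) = (1::'k::field)"
  unfolding dm_eval by (subst sum_single[where za=0]) (auto simp: tpow_bot)

lemma dm_mid: "Delta_mono q (b1, Suc k) ((b1, k), (b1 + int k, 1)) =
   (tpow q Delta_y (Suc k) (pt k 1) :: 'k::field)"
  unfolding dm_eval by (subst sum_single[where za=k]) (auto simp del: tpow.simps)

lemma dm_supp': "Delta_mono q b c \<noteq> (0::'k::field) \<Longrightarrow>
   \<exists>i\<le>snd b. c = ((fst b, i),(fst b + int i, snd b - i))"
  by (cases b) (auto dest: dm_supp)

lemma D1z:
  assumes deg: "\<forall>b\<in>fsupp u. snd b \<le> e" and e: "e \<ge> 1"
  shows "Delta q u ((a,e),(a,0)) = (0::'k::field)"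
  unfolding Delta_def
proof (rule sum.neutral, rule ballI)
  fix b assume b: "b \<in> fsupp u"
  show "u b * Delta_mono q b ((a, e), a, 0) = 0"
  proof (rule ccontr)
    assume "u b * Delta_mono q b ((a, e), a, 0) \<noteq> 0"
    then have "Delta_mono q b ((a, e), a, 0) \<noteq> (0::'k)" by auto
    from dm_supp'[OF this] obtain i where "i \<le> snd b" "((a, e), a, 0) = ((fst b, i),(fst b + int i, snd b - i))"
      by blast
    with deg b e show False by auto
  qed
qed

lemma D2:
  assumes fin: "finite (fsupp u)" and deg: "\<forall>b\<in>fsupp u. snd b \<le> e"
  shows "Delta q u ((a,0),(a,e)) = (u (a,e) :: 'k::field)"
  unfolding Delta_def
proof (subst sum_single[where za="(a,e)"])
  show "finite (fsupp u)" by fact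
  show "u (a,e) * Delta_mono q (a,e) ((a, 0), a, e) = u (a, e)" by (simp add: dm_bot)
  show "u (a,e) * Delta_mono q (a,e) ((a, 0), a, e) = 0" if "(a,e) \<notin> fsupp u"
    using that by (simp add: fsupp_def)
  fix b assume b: "b \<in> fsupp u" "b \<noteq> (a,e)"
  show "u b * Delta_mono q b ((a, 0), a, e) = 0"
  proof (rule ccontr)
    assume "u b * Delta_mono q b ((a, 0), a, e) \<noteq> 0"
    then have "Delta_mono q b ((a, 0), a, e) \<noteq> (0::'k)" by auto
    from dm_supp'[OF this] obtain i where "i \<le> snd b" "((a, 0), a, e) = ((fst b, i),(fst b + int i, snd b - i))"
      by blast
    with b show False by (cases b) auto
  qed
qed

lemma D3:
  assumes fin: "finite (fsupp u)" and deg: "\<forall>b\<in>fsupp u. snd b \<le> Suc k"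
  shows "Delta q u ((a,k),(a + int k,1)) = (u (a,Suc k) * tpow q Delta_y (Suc k) (pt k 1) :: 'k::field)"
  unfolding Delta_def
proof (subst sum_single[where za="(a,Suc k)"])
  show "finite (fsupp u)" by fact
  show "u (a,Suc k) * Delta_mono q (a,Suc k) ((a, k), a + int k, 1) = u (a,Suc k) * tpow q Delta_y (Suc k) (pt k 1)"
    by (subst dm_mid) (rule refl)
  show "u (a,Suc k) * Delta_mono q (a,Suc k) ((a, k), a + int k, 1) = 0" if "(a,Suc k) \<notin> fsupp u"
    using that by (simp add: fsupp_def)
  fix b assume b: "b \<in> fsupp u" "b \<noteq> (a,Suc k)"
  show "u b * Delta_mono q b ((a, k), a + int k, 1) = 0"
  proof (rule ccontr)
    assume "u b * Delta_mono q b ((a, k), a + int k, 1) \<noteq> 0"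
    then have "Delta_mono q b ((a, k), a + int k, 1) \<noteq> (0::'k)" by auto
    from dm_supp'[OF this] obtain i where "i \<le> snd b" "((a, k), a + int k, 1) = ((fst b, i),(fst b + int i, snd b - i))"
      by blast
    with b deg show False by (cases b) auto
  qed
qed

lemma D4:
  assumes "Delta q u c \<noteq> (0::'k::field)"
  shows "\<exists>b\<in>fsupp u. snd (fst c) + snd (snd c) = snd b"
proof -
  from assms obtain b where b: "b \<in> fsupp u" "u b * Delta_mono q b c \<noteq> 0"
    unfolding Delta_def by (meson sum.not_neutral_contains_not_neutral)
  then have "Delta_mono q b c \<noteq> (0::'k)" by auto
  from dm_supp'[OF this] obtain i where "i \<le> snd b" "c = ((fst b, i),(fst b + int i, snd b - i))"
    by blast
  with b show ?thesis by auto
qed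

lemma Dfin:
  assumes "finite (fsupp u)"
  shows "finite (fsupp (Delta q u :: 'k::field hq2))"
proof -
  have "fsupp (Delta q u) \<subseteq> (\<Union>b\<in>fsupp u. (\<lambda>i. ((fst b, i),(fst b + int i, snd b - i))) ` {..snd b})"
  proof
    fix c assume "c \<in> fsupp (Delta q u :: 'k hq2)"
    then have "Delta q u c \<noteq> (0::'k)" by (simp add: fsupp_def)
    then obtain b where b: "b \<in> fsupp u" "u b * Delta_mono q b c \<noteq> 0"
      unfolding Delta_def by (meson sum.not_neutral_contains_not_neutral)
    then have "Delta_mono q b c \<noteq> (0::'k)" by auto
    from dm_supp'[OF this] b show "c \<in> (\<Union>b\<in>fsupp u. (\<lambda>i. ((fst b, i),(fst b + int i, snd b - i))) ` {..snd b})"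
      by blast
  qed
  then show ?thesis by (rule finite_subset) (use assms in auto)
qed

lemma fsupp_hmono: "fsupp (hmono b :: 'k::field hq) = {b}"
  by (auto simp: fsupp_def hmono_def)

lemma Dgrp: "Delta q (hmono (c,0)) p = (if p = ((c,0),(c,0)) then 1 else (0::'k::field))"
proof -
  have "Delta q (hmono (c,0)) p = Delta_mono q (c,0) p"
    unfolding Delta_def fsupp_hmono by (simp add: hmono_def)
  also have "\<dots> = (if p = ((c,0),(c,0)) then 1 else 0)"
    unfolding dm_eval by (auto simp: tmono_def pt_def)
  finally show ?thesis .
qed

lemma Hbelow_zero: "g \<in> Hbelow n \<Longrightarrow> n \<le> snd c \<Longrightarrow> g c = 0"
  by (force simp: Hbelow_def fsupp_def)

lemma hmono_Hq: "hmono b \<in> (Hq :: 'k::field hq set)"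
  by (simp add: Hq_def fin_supp_def fsupp_hmono)

lemma hmono_below: "snd b < n \<Longrightarrow> hmono b \<in> (Hbelow n :: 'k::field hq set)"
  by (simp add: Hbelow_def hmono_Hq fsupp_hmono)

lemma Hq_fin: "g \<in> Hq \<Longrightarrow> finite (fsupp g)"
  by (simp add: Hq_def fin_supp_def)

lemma grouplike:
  assumes u: "u \<in> Hq" and gl: "\<And>p. Delta q u p = u (fst p) * (u (snd p) :: 'k::field)"
  shows "\<forall>b\<in>fsupp u. snd b = 0"
proof (rule ccontr)
  assume "\<not> (\<forall>b\<in>fsupp u. snd b = 0)"
  then obtain b0 where b0: "b0 \<in> fsupp u" "snd b0 \<noteq> 0" by blast
  have fin: "finite (fsupp u)" using u by (rule Hq_fin)
  define e where "e = Max (snd ` fsupp u)"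
  have deg: "\<forall>b\<in>fsupp u. snd b \<le> e" unfolding e_def using fin by auto
  have "e \<in> snd ` fsupp u" unfolding e_def using fin b0 by (intro Max_in) auto
  then obtain a where a: "(a,e) \<in> fsupp u" by force
  have e1: "e \<ge> 1" using deg b0 by force
  have "0 = u (a,e) * u (a,0)" using D1z[OF deg e1, of q a] gl[of "((a,e),(a,0))"] by simp
  moreover have "u (a,e) = u (a,0) * u (a,e)" using D2[OF fin deg, of q a] gl[of "((a,0),(a,e))"] by simp
  ultimately have "u (a,e) = 0" by (metis mult.commute mult_zero_left)
  with a show False by (simp add: fsupp_def)
qed

definition lin :: "('k::field hq \<Rightarrow> 'k hq) \<Rightarrow> bool" where
  "lin f \<longleftrightarrow> (\<forall>g\<in>Hq. f g = (\<lambda>c. \<Sum>b\<in>fsupp g. g b * f (hmono b) c))"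

lemma tm_hmono_grp:
  fixes f :: "'k::field hq \<Rightarrow> 'k hq"
  shows "tensor_map f (Delta q (hmono (c,0))) p = f (hmono (c,0)) (fst p) * f (hmono (c,0)) (snd p)"
proof -
  have "fsupp (Delta q (hmono (c,0)) :: 'k hq2) = {((c,0),(c,0))}"
    by (auto simp: fsupp_def Dgrp)
  then show ?thesis unfolding tensor_map_def by (simp add: Dgrp)
qed

locale cmap =
  fixes q :: "'k::field" and f :: "'k hq \<Rightarrow> 'k hq"
  assumes closed: "\<And>g. g \<in> Hq \<Longrightarrow> f g \<in> Hq"
    and lin: "lin f"
    and coal: "\<And>g. g \<in> Hq \<Longrightarrow> Delta q (f g) = tensor_map f (Delta q g)"
    and qa: "\<forall>n::nat. n > 0 \<longrightarrow> q ^ n \<noteq> 1"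
begin

lemma expand: "g \<in> Hq \<Longrightarrow> f g c = (\<Sum>b\<in>fsupp g. g b * f (hmono b) c)"
  using lin unfolding lin_def by metis

lemma grp0: "\<forall>b\<in>fsupp (f (hmono (c,0))). snd b = 0"
proof (rule grouplike[of _ q])
  show "f (hmono (c, 0)) \<in> Hq" by (rule closed[OF hmono_Hq])
  fix p show "Delta q (f (hmono (c, 0))) p = f (hmono (c, 0)) (fst p) * f (hmono (c, 0)) (snd p)"
    using coal[OF hmono_Hq] tm_hmono_grp by metis
qed

lemma P1: "h \<in> Hbelow 1 \<Longrightarrow> f h \<in> Hbelow 1"
proof -
  assume h: "h \<in> Hbelow 1"
  then have hq: "h \<in> Hq" by (simp add: Hbelow_def)
  have "f h c = 0" if c: "snd c \<noteq> 0" for c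
  proof -
    have "f h c = (\<Sum>b\<in>fsupp h. h b * f (hmono b) c)" by (rule expand[OF hq])
    also have "\<dots> = 0"
    proof (rule sum.neutral, rule ballI)
      fix b assume b: "b \<in> fsupp h"
      then have "snd b = 0" using h by (auto simp: Hbelow_def)
      then obtain b1 where "b = (b1, 0)" by (cases b) auto
      moreover have "\<forall>x\<in>fsupp (f (hmono (b1,0))). snd x = 0" by (rule grp0)
      ultimately have "c \<notin> fsupp (f (hmono b))" using c by auto
      then have "f (hmono b) c = 0" by (simp add: fsupp_def)
      then show "h b * f (hmono b) c = 0" by simp
    qed
    finally show ?thesis .
  qed
  then show ?thesis using closed[OF hq] by (auto simp: Hbelow_def fsupp_def)
qed

lemma Pstep:
  assumes n: "n \<ge> 1" and IH: "\<And>h. h \<in> Hbelow n \<Longrightarrow> f h \<in> Hbelow n"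
    and h: "h \<in> Hbelow (Suc n)"
  shows "f h \<in> Hbelow (Suc n)"
proof (rule ccontr)
  assume nb: "f h \<notin> Hbelow (Suc n)"
  have hq: "h \<in> Hq" using h by (simp add: Hbelow_def)
  let ?g = "f h"
  have gq: "?g \<in> Hq" by (rule closed[OF hq])
  have fin: "finite (fsupp ?g)" using gq by (rule Hq_fin)
  have "\<not> fsupp ?g \<subseteq> {b. snd b < Suc n}" using nb gq by (simp add: Hbelow_def)
  then obtain b0 where b0: "b0 \<in> fsupp ?g" "\<not> snd b0 < Suc n"
    by blast
  define e where "e = Max (snd ` fsupp ?g)"
  have deg: "\<forall>b\<in>fsupp ?g. snd b \<le> e" unfolding e_def using fin by auto
  have "e \<in> snd ` fsupp ?g" unfolding e_def using fin b0 by (intro Max_in) auto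
  then obtain a where a: "(a,e) \<in> fsupp ?g" by force
  have en: "e \<ge> Suc n" using deg b0 by force
  then obtain k where k: "e = Suc k" "k \<ge> n" by (cases e) auto
  have "Delta q ?g ((a,k),(a + int k,1)) = ?g (a,e) * tpow q Delta_y (Suc k) (pt k 1)"
    using D3[OF fin, of k q a] deg k by simp
  moreover have "?g (a,e) \<noteq> 0" using a by (simp add: fsupp_def)
  moreover have "tpow q Delta_y (Suc k) (pt k 1) \<noteq> 0" by (rule tpow_mid_nz[OF qa])
  ultimately have ne: "Delta q ?g ((a,k),(a + int k,1)) \<noteq> 0" by simp
  have "Delta q ?g ((a,k),(a + int k,1)) = tensor_map f (Delta q h) ((a,k),(a + int k,1))"
    by (simp add: coal[OF hq])
  also have "\<dots> = 0"
    unfolding tensor_map_def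
  proof (rule sum.neutral, rule ballI)
    fix p' assume p': "p' \<in> fsupp (Delta q h)"
    then have "Delta q h p' \<noteq> 0" by (simp add: fsupp_def)
    from D4[OF this] obtain b where b: "b \<in> fsupp h" "snd (fst p') + snd (snd p') = snd b" by blast
    have "snd b \<le> n" using b h by (auto simp: Hbelow_def)
    show "Delta q h p' * f (hmono (fst p')) (fst ((a, k), a + int k, 1)) *
          f (hmono (snd p')) (snd ((a, k), a + int k, 1)) = 0"
    proof (cases "snd (snd p') = 0")
      case True
      then have "f (hmono (snd p')) \<in> Hbelow 1" by (intro P1 hmono_below) simp
      then have "f (hmono (snd p')) (a + int k, 1) = 0" by (rule Hbelow_zero) simp
      then show ?thesis by simp
    next
      case False
      then have "snd (fst p') < n" using b \<open>snd b \<le> n\<close> by linarith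
      then have "f (hmono (fst p')) \<in> Hbelow n" by (intro IH hmono_below)
      then have "f (hmono (fst p')) (a, k) = 0" by (rule Hbelow_zero) (use k in simp)
      then show ?thesis by simp
    qed
  qed
  finally show False using ne by simp
qed

lemma Pall: "n \<ge> 1 \<Longrightarrow> h \<in> Hbelow n \<Longrightarrow> f h \<in> Hbelow n"
proof (induction n arbitrary: h rule: dec_induct)
  case base
  then show ?case by (rule P1)
next
  case (step n)
  then show ?case using Pstep by blast
qed

end

lemma lin_of:
  fixes F :: "'k::field hq \<Rightarrow> 'k hq"
  assumes add: "\<forall>f\<in>Hq. \<forall>g\<in>Hq. F (\<lambda>b. f b + g b) = (\<lambda>b. F f b + F g b)"
    and smul: "\<forall>c. \<forall>f\<in>Hq. F (\<lambda>b. c * f b) = (\<lambda>b. c * F f b)"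
  shows "lin F"
  unfolding lin_def
proof
  fix g :: "'k hq" assume g: "g \<in> Hq"
  have fin: "finite (fsupp g)" using g by (rule Hq_fin)
  have rq: "(\<lambda>y. if y \<in> A then g y else 0) \<in> Hq" if "finite A" for A
  proof -
    have "fsupp (\<lambda>y. if y \<in> A then g y else 0) \<subseteq> A" by (auto simp: fsupp_def)
    then show ?thesis using that by (auto simp: Hq_def fin_supp_def intro: finite_subset)
  qed
  have zq: "(\<lambda>y. 0::'k) \<in> Hq" by (simp add: Hq_def fin_supp_def fsupp_def)
  have F0: "F (\<lambda>y. 0) = (\<lambda>y. 0)" using smul[rule_format, OF zq, of 0] by simp
  have main: "F (\<lambda>y. if y \<in> A then g y else 0) = (\<lambda>c. \<Sum>b\<in>A. g b * F (hmono b) c)"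
    if "finite A" for A
    using that
  proof (induction A rule: finite_induct)
    case empty
    then show ?case using F0 by simp
  next
    case (insert x A)
    have eq: "(\<lambda>y. if y \<in> insert x A then g y else 0) =
        (\<lambda>y. (if y \<in> A then g y else 0) + (\<lambda>y. g x * hmono x y) y)"
      using insert(2) by (auto simp: hmono_def)
    have hq: "(\<lambda>y. g x * hmono x y) \<in> Hq" using smul hmono_Hq
    proof -
      have "fsupp (\<lambda>y. g x * (hmono x y :: 'k)) \<subseteq> {x}" by (auto simp: fsupp_def hmono_def)
      then show ?thesis by (auto simp: Hq_def fin_supp_def intro: finite_subset)
    qed
    have "F (\<lambda>y. if y \<in> insert x A then g y else 0) =
        (\<lambda>b. F (\<lambda>y. if y \<in> A then g y else 0) b + F (\<lambda>y. g x * hmono x y) b)"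
      unfolding eq by (rule add[rule_format, OF rq[OF insert(1)] hq])
    also have "F (\<lambda>y. g x * hmono x y) = (\<lambda>b. g x * F (hmono x) b)"
      by (rule smul[rule_format, OF hmono_Hq])
    finally show ?case using insert by (simp add: add.commute)
  qed
  have "(\<lambda>y. if y \<in> fsupp g then g y else 0) = g" by (auto simp: fsupp_def)
  then show "F g = (\<lambda>c. \<Sum>b\<in>fsupp g. g b * F (hmono b) c)" using main[OF fin] by simp
qed

lemma compose_tm:
  fixes F G :: "'k::field hq \<Rightarrow> 'k hq"
  assumes linG: "lin G" and FQ: "\<And>b. F (hmono b) \<in> Hq"
    and GF: "\<And>b. G (F (hmono b)) = hmono b" and finT: "finite (fsupp T)"
  shows "tensor_map G (tensor_map F T) p = T p"
proof -
  define a where "a c x = F (hmono c) x" for c x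
  define g' where "g' x y = G (hmono x) y" for x y
  define T' where "T' = tensor_map F T"
  define S where "S = fsupp T"
  define AB where "AB p'' = fsupp (F (hmono (fst p''))) \<times> fsupp (F (hmono (snd p'')))" for p'' :: "(int\<times>nat)\<times>(int\<times>nat)"
  define U where "U = (\<Union>p''\<in>S. AB p'')"
  have finAB: "finite (AB p'')" for p'' unfolding AB_def using FQ Hq_fin by blast
  have finU: "finite U" unfolding U_def S_def using finT finAB by blast
  have T'eq: "T' p' = (\<Sum>p''\<in>S. T p'' * a (fst p'') (fst p') * a (snd p'') (snd p'))" for p'
    unfolding T'_def tensor_map_def S_def a_def by simp
  have suppT': "fsupp T' \<subseteq> U"
  proof
    fix p' assume "p' \<in> fsupp T'"
    then have "T' p' \<noteq> 0" by (simp add: fsupp_def)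
    then obtain p'' where "p'' \<in> S" "T p'' * a (fst p'') (fst p') * a (snd p'') (snd p') \<noteq> 0"
      unfolding T'eq by (meson sum.not_neutral_contains_not_neutral)
    then show "p' \<in> U" unfolding U_def AB_def a_def fsupp_def by (auto simp: mem_Times_iff)
  qed
  have "tensor_map G T' p = (\<Sum>p'\<in>fsupp T'. T' p' * g' (fst p') (fst p) * g' (snd p') (snd p))"
    unfolding tensor_map_def g'_def by simp
  also have "\<dots> = (\<Sum>p'\<in>U. T' p' * g' (fst p') (fst p) * g' (snd p') (snd p))"
    by (rule sum.mono_neutral_left) (use finU suppT' in \<open>auto simp: fsupp_def\<close>)
  also have "\<dots> = (\<Sum>p'\<in>U. \<Sum>p''\<in>S. T p'' * ((a (fst p'') (fst p') * g' (fst p') (fst p)) *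
                 (a (snd p'') (snd p') * g' (snd p') (snd p))))"
    unfolding T'eq sum_distrib_right by (intro sum.cong refl) (simp add: algebra_simps)
  also have "\<dots> = (\<Sum>p''\<in>S. \<Sum>p'\<in>U. T p'' * ((a (fst p'') (fst p') * g' (fst p') (fst p)) *
                 (a (snd p'') (snd p') * g' (snd p') (snd p))))"
    by (rule sum.swap)
  also have "\<dots> = (\<Sum>p''\<in>S. T p'' * (hmono (fst p'') (fst p) * hmono (snd p'') (snd p)))"
  proof (rule sum.cong[OF refl])
    fix p'' assume p'': "p'' \<in> S"
    let ?h = "\<lambda>p'. (a (fst p'') (fst p') * g' (fst p') (fst p)) * (a (snd p'') (snd p') * g' (snd p') (snd p))"
    have "(\<Sum>p'\<in>U. ?h p') = (\<Sum>p'\<in>AB p''. ?h p')"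
    proof (rule sum.mono_neutral_right[OF finU])
      show "AB p'' \<subseteq> U" unfolding U_def using p'' by blast
      show "\<forall>i\<in>U - AB p''. ?h i = 0"
        unfolding AB_def a_def fsupp_def by (auto simp: mem_Times_iff)
    qed
    also have "\<dots> = (\<Sum>x\<in>fsupp (F (hmono (fst p''))). a (fst p'') x * g' x (fst p)) *
                    (\<Sum>y\<in>fsupp (F (hmono (snd p''))). a (snd p'') y * g' y (snd p))"
      unfolding AB_def sum_product sum.cartesian_product by (simp add: case_prod_beta)
    also have "\<dots> = hmono (fst p'') (fst p) * hmono (snd p'') (snd p)"
    proof -
      have "G (F (hmono c)) x = (\<Sum>y\<in>fsupp (F (hmono c)). a c y * g' y x)" for c x
        using linG FQ[of c] unfolding lin_def a_def g'_def by simp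
      then show ?thesis by (simp only: GF)
    qed
    finally show "(\<Sum>p'\<in>U. T p'' * ?h p') = T p'' * (hmono (fst p'') (fst p) * hmono (snd p'') (snd p))"
      by (simp add: sum_distrib_left[symmetric])
  qed
  also have "\<dots> = T p"
  proof (subst sum_single[where za=p])
    show "finite S" unfolding S_def by fact
    show "p \<notin> S \<Longrightarrow> T p * (hmono (fst p) (fst p) * hmono (snd p) (snd p)) = 0"
      unfolding S_def fsupp_def by simp
    show "T p * (hmono (fst p) (fst p) * hmono (snd p) (snd p)) = T p" by (simp add: hmono_def)
    fix x assume "x \<in> S" "x \<noteq> p"
    then show "T x * (hmono (fst x) (fst p) * hmono (snd x) (snd p)) = 0"
      by (cases x, cases p) (auto simp: hmono_def)
  qed
  finally show ?thesis unfolding T'_def .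
qed


lemma Hq_add: "f \<in> Hq \<Longrightarrow> g \<in> Hq \<Longrightarrow> (\<lambda>b. f b + g b) \<in> (Hq :: 'k::field hq set)"
proof -
  assume "f \<in> Hq" "g \<in> Hq"
  then have "finite (fsupp f \<union> fsupp g)" by (simp add: Hq_fin)
  moreover have "fsupp (\<lambda>b. f b + g b) \<subseteq> fsupp f \<union> fsupp g" by (auto simp: fsupp_def)
  ultimately show ?thesis by (simp add: Hq_def fin_supp_def finite_subset)
qed

lemma Hq_smul: "f \<in> Hq \<Longrightarrow> (\<lambda>b. c * f b) \<in> (Hq :: 'k::field hq set)"
proof -
  assume "f \<in> Hq"
  then have "finite (fsupp f)" by (simp add: Hq_fin)
  moreover have "fsupp (\<lambda>b. c * f b) \<subseteq> fsupp f" by (auto simp: fsupp_def)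
  ultimately show ?thesis by (simp add: Hq_def fin_supp_def finite_subset)
qed

theorem lemma2p8:
  fixes q :: "'k::field" and \<phi> :: "'k hq \<Rightarrow> 'k hq" and m :: nat
  assumes "q \<noteq> 0"
    and "\<forall>n::nat. n > 0 \<longrightarrow> q ^ n \<noteq> 1"
    and "\<phi> \<in> Aut0 q"
    and "m \<ge> 1"
  shows "\<not> (\<phi> ` Hdeg m \<subseteq> Hbelow m)"
proof
  assume sub: "\<phi> ` Hdeg m \<subseteq> Hbelow m"
  have add: "\<forall>f\<in>Hq. \<forall>g\<in>Hq. \<phi> (\<lambda>b. f b + g b) = (\<lambda>b. \<phi> f b + \<phi> g b)"
    and smul: "\<forall>c. \<forall>f\<in>Hq. \<phi> (\<lambda>b. c * f b) = (\<lambda>b. c * \<phi> f b)"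
    and bij: "bij_betw \<phi> Hq Hq"
    and coal: "\<forall>f\<in>Hq. Delta q (\<phi> f) = tensor_map \<phi> (Delta q f)"
    using assms(3) unfolding Aut0_def by auto
  define \<psi> where "\<psi> = inv_into Hq \<phi>"
  have inj: "inj_on \<phi> Hq" and im: "\<phi> ` Hq = Hq" using bij by (auto simp: bij_betw_def)
  have \<phi>Q: "g \<in> Hq \<Longrightarrow> \<phi> g \<in> Hq" for g using im by blast
  have \<phi>\<psi>: "g \<in> Hq \<Longrightarrow> \<phi> (\<psi> g) = g" for g unfolding \<psi>_def using im by (simp add: f_inv_into_f)
  have \<psi>\<phi>: "g \<in> Hq \<Longrightarrow> \<psi> (\<phi> g) = g" for g unfolding \<psi>_def using inj by (simp add: inv_into_f_f)
  have \<psi>Q: "g \<in> Hq \<Longrightarrow> \<psi> g \<in> Hq" for g unfolding \<psi>_def using im by (metis inv_into_into)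
  have \<psi>add: "\<forall>f\<in>Hq. \<forall>g\<in>Hq. \<psi> (\<lambda>b. f b + g b) = (\<lambda>b. \<psi> f b + \<psi> g b)"
  proof (intro ballI)
    fix f g :: "'k hq" assume f: "f \<in> Hq" and g: "g \<in> Hq"
    have "\<phi> (\<lambda>b. \<psi> f b + \<psi> g b) = (\<lambda>b. \<phi> (\<psi> f) b + \<phi> (\<psi> g) b)"
      by (rule add[rule_format, OF \<psi>Q[OF f] \<psi>Q[OF g]])
    also have "\<dots> = (\<lambda>b. f b + g b)" using f g \<phi>\<psi> by simp
    finally have "\<psi> (\<lambda>b. f b + g b) = \<psi> (\<phi> (\<lambda>b. \<psi> f b + \<psi> g b))" by simp
    also have "\<dots> = (\<lambda>b. \<psi> f b + \<psi> g b)" by (rule \<psi>\<phi>[OF Hq_add[OF \<psi>Q[OF f] \<psi>Q[OF g]]])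
    finally show "\<psi> (\<lambda>b. f b + g b) = (\<lambda>b. \<psi> f b + \<psi> g b)" .
  qed
  have \<psi>smul: "\<forall>c. \<forall>f\<in>Hq. \<psi> (\<lambda>b. c * f b) = (\<lambda>b. c * \<psi> f b)"
  proof (intro allI ballI)
    fix c and f :: "'k hq" assume f: "f \<in> Hq"
    have "\<phi> (\<lambda>b. c * \<psi> f b) = (\<lambda>b. c * \<phi> (\<psi> f) b)"
      by (rule smul[rule_format, OF \<psi>Q[OF f]])
    also have "\<dots> = (\<lambda>b. c * f b)" using f \<phi>\<psi> by simp
    finally have "\<psi> (\<lambda>b. c * f b) = \<psi> (\<phi> (\<lambda>b. c * \<psi> f b))" by simp
    also have "\<dots> = (\<lambda>b. c * \<psi> f b)" by (rule \<psi>\<phi>[OF Hq_smul[OF \<psi>Q[OF f]]])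
    finally show "\<psi> (\<lambda>b. c * f b) = (\<lambda>b. c * \<psi> f b)" .
  qed
  have lin\<psi>: "lin \<psi>" by (rule lin_of[OF \<psi>add \<psi>smul])
  have \<psi>coal: "Delta q (\<psi> g) = tensor_map \<psi> (Delta q g)" if g: "g \<in> Hq" for g
  proof
    fix p
    have "tensor_map \<psi> (Delta q g) p = tensor_map \<psi> (Delta q (\<phi> (\<psi> g))) p" using \<phi>\<psi>[OF g] by simp
    also have "\<dots> = tensor_map \<psi> (tensor_map \<phi> (Delta q (\<psi> g))) p"
      using coal \<psi>Q[OF g] by simp
    also have "\<dots> = Delta q (\<psi> g) p"
    proof (rule compose_tm[OF lin\<psi>])
      show "\<phi> (hmono b) \<in> Hq" for b by (rule \<phi>Q[OF hmono_Hq])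
      show "\<psi> (\<phi> (hmono b)) = hmono b" for b by (rule \<psi>\<phi>[OF hmono_Hq])
      show "finite (fsupp (Delta q (\<psi> g)))" by (rule Dfin[OF Hq_fin[OF \<psi>Q[OF g]]])
    qed
    finally show "Delta q (\<psi> g) p = tensor_map \<psi> (Delta q g) p" by simp
  qed
  interpret cmap q \<psi>
    by unfold_locales (use \<psi>Q lin\<psi> \<psi>coal assms(2) in auto)
  define e0 :: "'k hq" where "e0 = hmono (0, m)"
  have "e0 \<in> Hdeg m" unfolding e0_def Hdeg_def by (simp add: hmono_Hq fsupp_hmono)
  then have "\<phi> e0 \<in> Hbelow m" using sub by blast
  then have "\<psi> (\<phi> e0) \<in> Hbelow m" using Pall assms(4) by blast
  then have "e0 \<in> Hbelow m" using \<psi>\<phi>[OF hmono_Hq] unfolding e0_def by simp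
  then have "e0 (0, m) = 0" by (rule Hbelow_zero) simp
  then show False unfolding e0_def hmono_def by simp
qed

end
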